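(* Let $\Gamma$ be a connected graph on vertices $\{1,\dots,N\}$ containing all loops $(i,i)$. Then there is an open, everywhere dense subset $\mathbf H_\Gamma^{(+)}\subset\mathbf H_\Gamma$ whose complement $\mathbf H_\Gamma\setminus\mathbf H_\Gamma^{(+)}$ has dimension smaller than $\dim\mathbf H_\Gamma$, such that $\dim L_0(V)=0$ (i.e. $l_V=\mathbb R^N$) for every $V\in\mathbf H_\Gamma^{(+)}$.
   Context: $\mathbf H_\Gamma$ is the set of real symmetric positive-definite $N\times N$ matrices $V$ with $V(i,j)=0$ whenever $(i,j)$ is not an edge of $\Gamma$; it is an open subset of a real vector space whose dimension equals the number of edges of $\Gamma$ (loops included). $l_V$ is the span of $V^ke_1$, $k\ge0$, where $e_1$ is the first standard basis vector (vertex $1$ is the particle in contact with the environment); $L_-(V)=\{(q,p)\in\mathbb R^{2N}:q,p\in l_V\}$ and $L_0(V)$ is its orthogonal complement. *)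

theory Defs
  imports "HOL-Analysis.Analysis"
begin

definition edge_space :: "('n::finite \<Rightarrow> 'n \<Rightarrow> bool) \<Rightarrow> (real^'n^'n) set" where
  "edge_space E = {V. transpose V = V \<and> (\<forall>i j. \<not> E i j \<longrightarrow> V $ i $ j = 0)}"

definition H_Gamma :: "('n::finite \<Rightarrow> 'n \<Rightarrow> bool) \<Rightarrow> (real^'n^'n) set" where
  "H_Gamma E = {V \<in> edge_space E. \<forall>x. x \<noteq> 0 \<longrightarrow> x \<bullet> (V *v x) > 0}"

text \<open>l_V = span of V^k e_1, k \<ge> 0, where e_1 is the basis vector of the vertex v1.\<close>
definition l_V :: "'n::finite \<Rightarrow> real^'n^'n \<Rightarrow> (real^'n) set" where
  "l_V v1 V = span (range (\<lambda>k. ((\<lambda>x. V *v x) ^^ k) (axis v1 1)))"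

definition L_minus :: "'n::finite \<Rightarrow> real^'n^'n \<Rightarrow> ((real^'n) \<times> (real^'n)) set" where
  "L_minus v1 V = {(q, p). q \<in> l_V v1 V \<and> p \<in> l_V v1 V}"

definition L_0 :: "'n::finite \<Rightarrow> real^'n^'n \<Rightarrow> ((real^'n) \<times> (real^'n)) set" where
  "L_0 v1 V = {z. \<forall>y \<in> L_minus v1 V. z \<bullet> y = 0}"

inductive_set poly_funs :: "((real^'n::finite^'n) \<Rightarrow> real) set" where
  const: "(\<lambda>V. c) \<in> poly_funs"
| coord: "(\<lambda>V. V $ i $ j) \<in> poly_funs"
| add: "p \<in> poly_funs \<Longrightarrow> q \<in> poly_funs \<Longrightarrow> (\<lambda>V. p V + q V) \<in> poly_funs"
| mult: "p \<in> poly_funs \<Longrightarrow> q \<in> poly_funs \<Longrightarrow> (\<lambda>V. p V * q V) \<in> poly_funs"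

text \<open>A subset A of H_Gamma has dimension smaller than dim H_Gamma (= dim edge_space):
  A lies in a proper real algebraic subset of the linear space edge_space E, i.e. in the
  zero set of a polynomial not vanishing identically on edge_space E.\<close>
definition lower_dim :: "('n::finite \<Rightarrow> 'n \<Rightarrow> bool) \<Rightarrow> (real^'n^'n) set \<Rightarrow> bool" where
  "lower_dim E A \<longleftrightarrow> (\<exists>p \<in> poly_funs. (\<exists>V \<in> edge_space E. p V \<noteq> 0) \<and> (\<forall>V \<in> A. p V = 0))"

end

theory Submission
  imports Defs "HOL-Computational_Algebra.Polynomial"
begin

lemma poly_sum:
  assumes "finite A" "\<And>a. a \<in> A \<Longrightarrow> f a \<in> poly_funs"
  shows "(\<lambda>V. \<Sum>a\<in>A. f a V) \<in> poly_funs"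
  using assms
proof (induction A rule: finite_induct)
  case empty then show ?case using poly_funs.const[of 0] by simp
next
  case (insert x F)
  then show ?case using poly_funs.add[of "f x" "\<lambda>V. \<Sum>a\<in>F. f a V"] by simp
qed

lemma poly_prod:
  assumes "finite A" "\<And>a. a \<in> A \<Longrightarrow> f a \<in> poly_funs"
  shows "(\<lambda>V. \<Prod>a\<in>A. f a V) \<in> poly_funs"
  using assms
proof (induction A rule: finite_induct)
  case empty then show ?case using poly_funs.const[of 1] by simp
next
  case (insert x F)
  then show ?case using poly_funs.mult[of "f x" "\<lambda>V. \<Prod>a\<in>F. f a V"] by simp
qed

lemma poly_det:
  fixes F :: "real^'n::finite^'n \<Rightarrow> real^'m::finite^'m"
  assumes "\<And>i j. (\<lambda>V. F V $ i $ j) \<in> poly_funs"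
  shows "(\<lambda>V. det (F V)) \<in> poly_funs"
proof -
  have "(\<lambda>V. \<Sum>p\<in>{p. p permutes (UNIV::'m set)}. of_int (sign p) * (\<Prod>i\<in>UNIV. F V $ i $ p i)) \<in> poly_funs"
    apply (rule poly_sum)
     apply simp
    apply (rule poly_funs.mult[OF poly_funs.const])
    apply (rule poly_prod)
    using assms by auto
  then show ?thesis unfolding det_def .
qed

definition kry :: "'n::finite \<Rightarrow> real^'n^'n \<Rightarrow> nat \<Rightarrow> real^'n" where
  "kry v1 V k = ((\<lambda>x. V *v x) ^^ k) (axis v1 1)"

lemma kry_0[simp]: "kry v1 V 0 = axis v1 1" by (simp add: kry_def)
lemma kry_Suc: "kry v1 V (Suc k) = V *v kry v1 V k" by (simp add: kry_def)

lemma poly_kry: "(\<lambda>V. kry v1 V k $ i) \<in> poly_funs"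
proof (induction k arbitrary: i)
  case 0 then show ?case using poly_funs.const by simp
next
  case (Suc k)
  have "(\<lambda>V. \<Sum>j\<in>UNIV. V $ i $ j * kry v1 V k $ j) \<in> poly_funs"
    by (rule poly_sum) (auto intro: poly_funs.mult poly_funs.coord Suc)
  then show ?case by (simp add: kry_Suc matrix_vector_mult_def)
qed

lemma poly_line:
  assumes "p \<in> poly_funs"
  shows "\<exists>P. \<forall>t. p (A + t *\<^sub>R D) = poly P t"
  using assms
proof (induction rule: poly_funs.induct)
  case (const c) then show ?case by (intro exI[of _ "[:c:]"]) simp
next
  case (coord i j) then show ?case by (intro exI[of _ "[:A$i$j, D$i$j:]"]) (simp add: algebra_simps)
next
  case (add p q)
  then obtain P Q where "\<forall>t. p (A + t *\<^sub>R D) = poly P t" "\<forall>t. q (A + t *\<^sub>R D) = poly Q t" by blast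
  then show ?case by (intro exI[of _ "P + Q"]) simp
next
  case (mult p q)
  then obtain P Q where "\<forall>t. p (A + t *\<^sub>R D) = poly P t" "\<forall>t. q (A + t *\<^sub>R D) = poly Q t" by blast
  then show ?case by (intro exI[of _ "P * Q"]) simp
qed

lemma poly_small_nonroot:
  fixes P :: "real poly"
  assumes "poly P t0 \<noteq> 0" "e > 0"
  shows "\<exists>t. 0 < t \<and> t < e \<and> poly P t \<noteq> 0"
proof -
  have "P \<noteq> 0" using assms by auto
  then have f: "finite {x. poly P x = 0}" by (rule poly_roots_finite)
  have "infinite {0<..<e}" using assms by simp
  then have "\<not> {0<..<e} \<subseteq> {x. poly P x = 0}" using f finite_subset by blast
  then show ?thesis by auto
qed

lemma poly_line_nonzero:
  assumes "p \<in> poly_funs" "p (A + t0 *\<^sub>R D) \<noteq> 0" "e > 0"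
  shows "\<exists>t. 0 < t \<and> t < e \<and> p (A + t *\<^sub>R D) \<noteq> 0"
proof -
  obtain P where P: "\<forall>t. p (A + t *\<^sub>R D) = poly P t" using poly_line[OF assms(1)] by blast
  show ?thesis using poly_small_nonroot[of P t0 e] assms P by auto
qed

lemma poly_cont: "p \<in> poly_funs \<Longrightarrow> continuous_on UNIV p"
proof (induction rule: poly_funs.induct)
  case (coord i j)
  have "bounded_linear (\<lambda>V::real^'a^'a. V $ i $ j)"
    using bounded_linear_compose[OF bounded_linear_vec_nth bounded_linear_vec_nth] by blast
  then show ?case by (simp add: linear_continuous_on)
qed (auto intro: continuous_intros)

definition gramM :: "'n::finite \<Rightarrow> 'n set \<Rightarrow> real^'n^'n \<Rightarrow> real^'n^'n" where
  "gramM v1 S V = (\<chi> i j. (\<Sum>k<CARD('n). kry v1 V k $ i * kry v1 V k $ j) + (if i = j \<and> i \<notin> S then 1 else 0))"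

definition "gram v1 S V = det (gramM v1 S V)"

lemma poly_gram: "(\<lambda>V. gram v1 S V) \<in> poly_funs"
  unfolding gram_def
proof (rule poly_det)
  fix i j
  have "(\<lambda>V. (\<Sum>k<CARD('a). kry v1 V k $ i * kry v1 V k $ j) + (if i = j \<and> i \<notin> S then 1 else 0)) \<in> poly_funs"
    by (intro poly_funs.add poly_sum poly_funs.mult poly_kry poly_funs.const) auto
  then show "(\<lambda>V. gramM v1 S V $ i $ j) \<in> poly_funs" by (simp add: gramM_def)
qed

lemma gramM_mult: "gramM v1 S V *v x = (\<Sum>k<CARD('n). (kry v1 V k \<bullet> x) *\<^sub>R kry v1 V k) + (\<chi> i. if i \<notin> S then x$i else 0)"
  for x :: "real^'n::finite"
proof -
  have "(gramM v1 S V *v x) $ i = ((\<Sum>k<CARD('n). (kry v1 V k \<bullet> x) *\<^sub>R kry v1 V k) + (\<chi> i. if i \<notin> S then x$i else 0)) $ i" for i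
  proof -
    have "(gramM v1 S V *v x) $ i = (\<Sum>j\<in>UNIV. ((\<Sum>k<CARD('n). kry v1 V k $ i * kry v1 V k $ j) + (if i = j \<and> i \<notin> S then 1 else 0)) * x $ j)"
      by (simp add: matrix_vector_mult_def gramM_def)
    also have "\<dots> = (\<Sum>j\<in>UNIV. (\<Sum>k<CARD('n). kry v1 V k $ i * kry v1 V k $ j * x $ j)) + (\<Sum>j\<in>UNIV. (if i = j \<and> i \<notin> S then 1 else 0) * x $ j)"
      by (simp add: distrib_right sum.distrib sum_distrib_right)
    also have "(\<Sum>j\<in>UNIV. (\<Sum>k<CARD('n). kry v1 V k $ i * kry v1 V k $ j * x $ j)) = (\<Sum>k<CARD('n). kry v1 V k $ i * (\<Sum>j\<in>UNIV. kry v1 V k $ j * x $ j))"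
      by (subst sum.swap) (simp add: sum_distrib_left mult.assoc)
    also have "(\<Sum>j\<in>UNIV. (if i = j \<and> i \<notin> S then 1 else 0) * x $ j) = (if i \<notin> S then x$i else 0)"
      by (simp add: if_distrib[where f="\<lambda>a. a * _"] cong: if_cong)
    finally show ?thesis
      by (simp add: inner_vec_def sum_component mult.commute)
  qed
  then show ?thesis by (simp add: vec_eq_iff)
qed

abbreviation "Rs S x \<equiv> (\<forall>i. i \<notin> S \<longrightarrow> x $ i = 0)"

lemma gram_inj: "gram v1 S V \<noteq> 0 \<longleftrightarrow> (\<forall>x. gramM v1 S V *v x = 0 \<longrightarrow> x = 0)"
proof -
  have "gram v1 S V \<noteq> 0 \<longleftrightarrow> inj (\<lambda>x. gramM v1 S V *v x)"
    using det_nz_iff_inj[of "\<lambda>x. gramM v1 S V *v x"] by (simp add: gram_def)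
  also have "\<dots> \<longleftrightarrow> (\<forall>x. gramM v1 S V *v x = 0 \<longrightarrow> x = 0)"
    by (rule linear_inj_iff_eq_0) simp
  finally show ?thesis .
qed

lemma G1:
  assumes "gram v1 S V \<noteq> 0" "Rs S x" "\<forall>k<CARD('n). x \<bullet> kry v1 V k = 0"
  shows "x = (0::real^'n::finite)"
proof -
  have "gramM v1 S V *v x = 0"
    using assms(2,3) by (simp add: gramM_mult inner_commute vec_eq_iff)
  then show ?thesis using assms(1) gram_inj by blast
qed

lemma G2:
  assumes "\<forall>x. Rs S x \<longrightarrow> (\<forall>k<CARD('n). x \<bullet> kry v1 V k = 0) \<longrightarrow> x = (0::real^'n::finite)"
  shows "gram v1 S V \<noteq> 0"
  unfolding gram_inj
proof (intro allI impI)
  fix x :: "real^'n" assume M: "gramM v1 S V *v x = 0"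
  have "x \<bullet> (gramM v1 S V *v x) = (\<Sum>k<CARD('n). (kry v1 V k \<bullet> x)^2) + (\<Sum>i\<in>UNIV. if i \<notin> S then (x$i)^2 else 0)"
  proof -
    have "x \<bullet> (\<chi> i. if i \<notin> S then x$i else 0) = (\<Sum>i\<in>UNIV. if i \<notin> S then (x$i)^2 else 0)"
      by (simp add: inner_vec_def power2_eq_square if_distrib[where f="\<lambda>a. _ * a"] cong: if_cong)
    moreover have "x \<bullet> (\<Sum>k<CARD('n). (kry v1 V k \<bullet> x) *\<^sub>R kry v1 V k) = (\<Sum>k<CARD('n). (kry v1 V k \<bullet> x)^2)"
      by (simp add: inner_sum_right inner_commute power2_eq_square)
    ultimately show ?thesis by (simp add: gramM_mult inner_add_right)
  qed
  then have sum0: "(\<Sum>k<CARD('n). (kry v1 V k \<bullet> x)^2) + (\<Sum>i\<in>UNIV. if i \<notin> S then (x$i)^2 else 0) = 0"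
    using M by simp
  have n1: "(\<Sum>k<CARD('n). (kry v1 V k \<bullet> x)^2) \<ge> 0" by (simp add: sum_nonneg)
  have n2: "(\<Sum>i\<in>UNIV. if i \<notin> S then (x$i)^2 else 0) \<ge> 0" by (simp add: sum_nonneg)
  have z1: "(\<Sum>k<CARD('n). (kry v1 V k \<bullet> x)^2) = 0" using sum0 n1 n2 by linarith
  have z2: "(\<Sum>i\<in>UNIV. if i \<notin> S then (x$i)^2 else 0) = 0" using sum0 n1 n2 by linarith
  have "\<forall>k\<in>{..<CARD('n)}. (kry v1 V k \<bullet> x)^2 = 0"
    using z1 by (subst (asm) sum_nonneg_eq_0_iff) auto
  then have a: "\<forall>k<CARD('n). x \<bullet> kry v1 V k = 0" by (simp add: inner_commute)
  have "\<forall>i\<in>UNIV. (if i \<notin> S then (x$i)^2 else 0) = 0"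
    using z2 by (subst (asm) sum_nonneg_eq_0_iff) auto
  then have b: "Rs S x"
  proof (intro allI impI)
    fix i assume "i \<notin> S"
    have "(if i \<notin> S then (x$i)^2 else 0) = 0" using \<open>\<forall>i\<in>UNIV. (if i \<notin> S then (x$i)^2 else 0) = 0\<close> by blast
    with \<open>i \<notin> S\<close> show "x $ i = 0" by simp
  qed
  show "x = 0" using assms a b by blast
qed

lemma kry_invariant:
  assumes "y \<in> span (kry v1 V ` {..<n})" "kry v1 V n \<in> span (kry v1 V ` {..<n})"
  shows "V *v y \<in> span (kry v1 V ` {..<n})"
proof -
  have sub: "subspace {y. V *v y \<in> span (kry v1 V ` {..<n})}"
    unfolding subspace_def
    apply (intro conjI ballI allI)
      apply (simp add: span_0)
     apply (simp add: matrix_vector_right_distrib span_add)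
    apply (simp add: matrix_vector_mult_scaleR span_scale)
    done
  have "V *v z \<in> span (kry v1 V ` {..<n})" if zin: "z \<in> kry v1 V ` {..<n}" for z
  proof -
    obtain j where j: "j < n" "z = kry v1 V j" using zin by blast
    then have "V *v z = kry v1 V (Suc j)" by (simp add: kry_Suc)
    then show ?thesis using j assms(2)
      by (cases "Suc j = n") (auto intro: span_base)
  qed
  then show ?thesis using span_induct[OF assms(1), of "\<lambda>y. V *v y \<in> span (kry v1 V ` {..<n})"] sub by auto
qed

lemma kry_stable_from:
  assumes "kry v1 V n \<in> span (kry v1 V ` {..<n})"
  shows "kry v1 V k \<in> span (kry v1 V ` {..<n})"
proof (induction k)
  case 0
  show ?case
  proof (cases "n = 0")
    case True then show ?thesis using assms by simp
  next
    case False
    then have "kry v1 V 0 \<in> kry v1 V ` {..<n}" by (intro image_eqI[where x=0]) auto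
    then show ?thesis by (rule span_base)
  qed
next
  case (Suc k)
  then show ?case using kry_invariant[OF Suc assms] by (simp add: kry_Suc)
qed

lemma kry_indep:
  assumes "\<forall>m<n. kry v1 V m \<notin> span (kry v1 V ` {..<m})"
  shows "independent (kry v1 V ` {..<n}) \<and> card (kry v1 V ` {..<n}) = n"
  using assms
proof (induction n)
  case 0 then show ?case by (simp add: independent_empty)
next
  case (Suc n)
  have p: "\<forall>m<n. kry v1 V m \<notin> span (kry v1 V ` {..<m})" using Suc.prems less_SucI by blast
  have IH: "independent (kry v1 V ` {..<n})" "card (kry v1 V ` {..<n}) = n" using Suc.IH[OF p] by blast+
  have nin: "kry v1 V n \<notin> span (kry v1 V ` {..<n})" using Suc.prems lessI by blast
  then have nin2: "kry v1 V n \<notin> kry v1 V ` {..<n}" by (meson span_base)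
  have eq: "kry v1 V ` {..<Suc n} = insert (kry v1 V n) (kry v1 V ` {..<n})"
    by (simp add: lessThan_Suc)
  have "independent (insert (kry v1 V n) (kry v1 V ` {..<n}))" by (rule independent_insertI[OF nin IH(1)])
  moreover have "card (insert (kry v1 V n) (kry v1 V ` {..<n})) = Suc n"
    using card_insert_disjoint[OF finite_imageI[OF finite_lessThan] nin2] IH(2) by simp
  ultimately show ?case unfolding eq by blast
qed

lemma kry_stable:
  fixes v1 :: "'n::finite"
  shows "kry v1 V k \<in> span (kry v1 V ` {..<CARD('n)})"
proof -
  have "\<exists>n\<le>CARD('n). kry v1 V n \<in> span (kry v1 V ` {..<n})"
  proof (rule ccontr)
    assume "\<not> ?thesis"
    then have "\<forall>m<Suc CARD('n). kry v1 V m \<notin> span (kry v1 V ` {..<m})" by auto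
    from kry_indep[OF this] have "independent (kry v1 V ` {..<Suc CARD('n)})" "card (kry v1 V ` {..<Suc CARD('n)}) = Suc CARD('n)"
      by auto
    then show False using independent_bound[of "kry v1 V ` {..<Suc CARD('n)}"] by simp
  qed
  then obtain n where n: "n \<le> CARD('n)" "kry v1 V n \<in> span (kry v1 V ` {..<n})" by blast
  have "kry v1 V k \<in> span (kry v1 V ` {..<n})" by (rule kry_stable_from[OF n(2)])
  moreover have "span (kry v1 V ` {..<n}) \<subseteq> span (kry v1 V ` {..<CARD('n)})"
    using n(1) by (intro span_mono image_mono) auto
  ultimately show ?thesis by blast
qed

lemma orth_span:
  assumes "y \<in> span A" "\<forall>a\<in>A. x \<bullet> a = 0"
  shows "x \<bullet> y = (0::real)"
proof -
  have "subspace {y. x \<bullet> y = 0}"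
    unfolding subspace_def by (auto simp: inner_add_right)
  then show ?thesis using span_induct[OF assms(1), of "\<lambda>y. x \<bullet> y = 0"] assms(2) by auto
qed

lemma kry_orth_all:
  fixes x :: "real^'n::finite"
  assumes "\<forall>k<CARD('n). x \<bullet> kry v1 V k = 0"
  shows "x \<bullet> kry v1 V k = 0"
  using orth_span[OF kry_stable[of v1 V k]] assms by auto

definition cyc :: "'n::finite \<Rightarrow> 'n set \<Rightarrow> real^'n^'n \<Rightarrow> bool" where
  "cyc v1 S V \<longleftrightarrow> (\<forall>x. Rs S x \<longrightarrow> (\<forall>k. x \<bullet> kry v1 V k = 0) \<longrightarrow> x = 0)"

lemma cyc_gram: "cyc v1 S V \<longleftrightarrow> gram v1 S V \<noteq> 0"
proof
  assume "cyc v1 S V"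
  then show "gram v1 S V \<noteq> 0" unfolding cyc_def using kry_orth_all by (intro G2) blast
next
  assume "gram v1 S V \<noteq> 0"
  then show "cyc v1 S V" unfolding cyc_def using G1 by blast
qed

lemma axis_comp: "axis k x $ i = (if i = k then x else 0)"
  by (simp add: axis_def)

lemma sym_dot:
  fixes W :: "real^'n::finite^'n"
  assumes "transpose W = W"
  shows "x \<bullet> (W *v y) = (W *v x) \<bullet> y"
proof -
  have "x \<bullet> (W *v y) = (x v* W) \<bullet> y" by (simp add: dot_lmul_matrix)
  also have "x v* W = transpose W *v x" by simp
  finally show ?thesis using assms by simp
qed

lemma sym_dot_pow:
  fixes W :: "real^'n::finite^'n"
  assumes "transpose W = W"
  shows "x \<bullet> (((\<lambda>y. W *v y) ^^ j) z) = (((\<lambda>y. W *v y) ^^ j) x) \<bullet> z"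
proof (induction j arbitrary: x)
  case 0 then show ?case by simp
next
  case (Suc j)
  have "x \<bullet> (((\<lambda>y. W *v y) ^^ Suc j) z) = (W *v x) \<bullet> (((\<lambda>y. W *v y) ^^ j) z)"
    by (simp add: sym_dot[OF assms])
  also have "\<dots> = (((\<lambda>y. W *v y) ^^ j) (W *v x)) \<bullet> z" by (rule Suc)
  also have "((\<lambda>y. W *v y) ^^ j) (W *v x) = ((\<lambda>y. W *v y) ^^ Suc j) x"
    by (simp add: funpow_Suc_right del: funpow.simps)
  finally show ?case .
qed

lemma pow_add: "((\<lambda>y. W *v y) ^^ n) (x + z) = ((\<lambda>y. W *v y) ^^ n) x + ((\<lambda>y. W *v y) ^^ n) z"
  for W :: "real^'n::finite^'n"
  by (induction n) (simp_all add: matrix_vector_right_distrib)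

lemma pow_scale: "((\<lambda>y. W *v y) ^^ n) (c *\<^sub>R x) = c *\<^sub>R ((\<lambda>y. W *v y) ^^ n) x"
  for W :: "real^'n::finite^'n"
  by (induction n) (simp_all add: matrix_vector_mult_scaleR)

lemma pow_bound:
  fixes W :: "real^'n::finite^'n"
  assumes "K \<ge> 0" "\<And>y. norm (W *v y) \<le> K * norm y"
  shows "norm (((\<lambda>y. W *v y) ^^ n) x) \<le> K ^ n * norm x"
proof (induction n)
  case 0 then show ?case by simp
next
  case (Suc n)
  have "norm (((\<lambda>y. W *v y) ^^ Suc n) x) \<le> K * norm (((\<lambda>y. W *v y) ^^ n) x)"
    using assms(2) by simp
  also have "\<dots> \<le> K * (K ^ n * norm x)" using Suc assms(1) by (simp add: mult_left_mono)
  finally show ?case by simp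
qed

lemma choose_c:
  fixes W :: "real^'n::finite^'n"
  assumes sym: "transpose W = W" and cyc: "cyc v1 S W" and sS: "s \<in> S"
  shows "\<exists>c. \<forall>a. W *v a - c *\<^sub>R a = - axis s 1 \<longrightarrow> a $ v1 \<noteq> 0"
proof -
  define F where "F = (\<lambda>y. W *v y)"
  define g where "g j = ((F ^^ j) (axis s 1)) $ v1" for j
  have "\<exists>j. g j \<noteq> 0"
  proof (rule ccontr)
    assume "\<not> (\<exists>j. g j \<noteq> 0)"
    then have g0: "\<And>j. g j = 0" by blast
    have "axis s 1 \<bullet> kry v1 W k = 0" for k
    proof -
      have "axis s 1 \<bullet> kry v1 W k = kry v1 W k \<bullet> axis s 1" by (simp add: inner_commute)
      also have "\<dots> = axis v1 1 \<bullet> ((F ^^ k) (axis s 1))"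
        unfolding kry_def F_def by (rule sym_dot_pow[OF sym, symmetric])
      also have "\<dots> = g k" by (simp add: g_def inner_axis')
      finally show ?thesis using g0 by simp
    qed
    moreover have "Rs S (axis s (1::real))" using sS by (auto simp: axis_comp)
    ultimately have "axis s (1::real) = 0" using cyc unfolding cyc_def by blast
    then show False by simp
  qed
  define j0 where "j0 = (LEAST j. g j \<noteq> 0)"
  have gj0: "g j0 \<noteq> 0" unfolding j0_def using \<open>\<exists>j. g j \<noteq> 0\<close> by (rule LeastI_ex)
  have gless: "g i = 0" if "i < j0" for i
    using not_less_Least[of i "\<lambda>j. g j \<noteq> 0"] that unfolding j0_def by blast
  obtain K0 where K0: "\<And>y. norm (W *v y) \<le> norm y * K0" "K0 > 0"
    using bounded_linear.pos_bounded[OF matrix_vector_mul_bounded_linear[of W]] by blast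
  define K where "K = K0"
  have Kb: "\<And>y. norm (W *v y) \<le> K * norm y" using K0(1) by (simp add: K_def mult.commute)
  have K0': "K \<ge> 0" using K0 by (simp add: K_def)
  define B where "B = K ^ Suc j0"
  have B0: "B \<ge> 0" using K0' by (simp add: B_def)
  define c where "c = K + 1 + B / \<bar>g j0\<bar>"
  have cK: "c - K = 1 + B / \<bar>g j0\<bar>" by (simp add: c_def)
  have cpos: "c - K > 0" using cK B0 gj0 by (simp add: add_pos_nonneg)
  show ?thesis
  proof (intro exI[of _ c] allI impI notI)
    fix a assume eq: "W *v a - c *\<^sub>R a = - axis s 1" and av: "a $ v1 = 0"
    have ca: "c *\<^sub>R a = F a + axis s 1" using eq unfolding F_def
      by (simp add: algebra_simps)
    have ident: "c ^ Suc j *\<^sub>R a = (\<Sum>i\<le>j. c ^ (j - i) *\<^sub>R (F ^^ i) (axis s 1)) + (F ^^ Suc j) a" for j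
    proof (induction j)
      case 0 then show ?case using ca by (simp add: add.commute)
    next
      case (Suc j)
      have "c ^ Suc (Suc j) *\<^sub>R a = c *\<^sub>R (c ^ Suc j *\<^sub>R a)" by simp
      also have "\<dots> = (\<Sum>i\<le>j. c ^ (Suc j - i) *\<^sub>R (F ^^ i) (axis s 1)) + c *\<^sub>R (F ^^ Suc j) a"
        unfolding Suc by (auto simp: scaleR_add_right scaleR_sum_right Suc_diff_le intro!: sum.cong)
      also have "c *\<^sub>R (F ^^ Suc j) a = (F ^^ Suc j) (c *\<^sub>R a)"
        unfolding F_def by (rule pow_scale[symmetric])
      also have "\<dots> = (F ^^ Suc (Suc j)) a + (F ^^ Suc j) (axis s 1)"
        unfolding ca F_def pow_add by (simp add: funpow_Suc_right del: funpow.simps)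
      finally show ?case by (simp add: add.assoc)
    qed
    have comp: "0 = g j0 + ((F ^^ Suc j0) a) $ v1"
    proof -
      have "(c ^ Suc j0 *\<^sub>R a) $ v1 = ((\<Sum>i\<le>j0. c ^ (j0 - i) *\<^sub>R (F ^^ i) (axis s 1)) + (F ^^ Suc j0) a) $ v1"
        using ident[of j0] by (rule arg_cong)
      then have "0 = (\<Sum>i\<le>j0. c ^ (j0 - i) * g i) + ((F ^^ Suc j0) a) $ v1"
        using av by (simp add: sum_component g_def del: funpow.simps)
      also have "(\<Sum>i\<le>j0. c ^ (j0 - i) * g i) = g j0"
      proof -
        have "(\<Sum>i\<le>j0. c ^ (j0 - i) * g i) = (\<Sum>i\<in>{j0}. c ^ (j0 - i) * g i)"
          by (rule sum.mono_neutral_right) (auto simp: gless)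
        then show ?thesis by simp
      qed
      finally show ?thesis .
    qed
    have hb: "\<bar>((F ^^ Suc j0) a) $ v1\<bar> \<le> B * norm a"
      using component_le_norm_cart[of "(F ^^ Suc j0) a" v1] pow_bound[OF K0' Kb, of "Suc j0" a]
      unfolding B_def F_def by linarith
    have "\<bar>c\<bar> * norm a \<le> K * norm a + 1"
    proof -
      have "\<bar>c\<bar> * norm a = norm (F a + axis s 1)" using ca by (metis norm_scaleR)
      also have "\<dots> \<le> norm (F a) + norm (axis s (1::real))" by (rule norm_triangle_ineq)
      also have "\<dots> \<le> K * norm a + 1" using Kb[of a] by (simp add: F_def)
      finally show ?thesis .
    qed
    moreover have "c \<ge> 0" using cpos K0' by linarith
    ultimately have na: "(c - K) * norm a \<le> 1" by (simp add: algebra_simps)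
    have "\<bar>g j0\<bar> \<le> B * norm a" using comp hb by simp
    then have "\<bar>g j0\<bar> * (c - K) \<le> B * norm a * (c - K)" using cpos by (simp add: mult_right_mono)
    also have "\<dots> = B * ((c - K) * norm a)" by simp
    also have "\<dots> \<le> B" using na B0 by (simp add: mult_left_le)
    finally have "\<bar>g j0\<bar> * (c - K) \<le> B" .
    moreover have "\<bar>g j0\<bar> * (c - K) = \<bar>g j0\<bar> + B" using gj0 unfolding cK by (simp add: field_simps)
    ultimately show False using gj0 by simp
  qed
qed

definition Mx :: "'n::finite \<Rightarrow> 'n \<Rightarrow> real^'n^'n" where
  "Mx a b = (\<chi> i j. if i = a \<and> j = b then 1 else 0)"

lemma Mx_comp: "Mx a b $ i $ j = (if i = a \<and> j = b then 1 else 0)"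
  by (simp add: Mx_def)

lemma Mx_mult: "(Mx a b *v y) $ i = (if i = a then y $ b else 0)"
  by (simp add: Mx_def matrix_vector_mult_def if_distrib[where f="\<lambda>x. x * _"] cong: if_cong)

definition supp :: "'n::finite set \<Rightarrow> real^'n^'n \<Rightarrow> bool" where
  "supp S W \<longleftrightarrow> (\<forall>i j. W $ i $ j \<noteq> 0 \<longrightarrow> i \<in> S \<and> j \<in> S)"

lemma supp_mult_agree:
  assumes "supp S W" "u \<notin> S" "\<forall>i. i \<noteq> u \<longrightarrow> y $ i = z $ i"
  shows "W *v y = W *v z"
proof -
  have h: "W $ i $ j * y $ j = W $ i $ j * z $ j" for i j
    using assms unfolding supp_def by (cases "j = u") auto
  show ?thesis unfolding matrix_vector_mult_def by (simp only: h)
qed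

lemma supp_mult_out:
  assumes "supp S W" "i \<notin> S"
  shows "(W *v y) $ i = 0"
proof -
  have "W $ i $ j = 0" for j using assms unfolding supp_def by blast
  then show ?thesis by (simp add: matrix_vector_mult_def)
qed

lemma ext_step0:
  fixes W :: "real^'n::finite^'n"
  assumes sym: "transpose W = W" and supp: "supp S W" and cyc: "cyc v1 S W"
    and v1S: "v1 \<in> S" and sS: "s \<in> S" and uS: "u \<notin> S"
    and c: "\<forall>a. W *v a - c *\<^sub>R a = - axis s 1 \<longrightarrow> a $ v1 \<noteq> 0"
  shows "cyc v1 (insert u S) (W + c *\<^sub>R Mx u u + Mx u s)"
proof -
  define Wt where "Wt = W + c *\<^sub>R Mx u u + Mx u s"
  have Wt_mult: "Wt *v y = W *v y + c *\<^sub>R (Mx u u *v y) + Mx u s *v y" for y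
    by (simp add: Wt_def matrix_vector_mult_add_rdistrib scaleR_matrix_vector_assoc)
  have uv: "u \<noteq> v1" using v1S uS by auto
  have us: "u \<noteq> s" using sS uS by auto
  have A: "\<forall>i. i \<noteq> u \<longrightarrow> kry v1 Wt k $ i = kry v1 W k $ i" for k
  proof (induction k)
    case 0 then show ?case by simp
  next
    case (Suc k)
    have "W *v kry v1 Wt k = W *v kry v1 W k" by (rule supp_mult_agree[OF supp uS Suc])
    then show ?case by (simp add: kry_Suc Wt_mult Mx_mult)
  qed
  have B: "z = 0" if "Rs S z" "\<forall>k. z \<bullet> kry v1 Wt k = 0" for z
  proof -
    have "z \<bullet> kry v1 W k = 0" for k
    proof -
      have h: "z $ i * kry v1 Wt k $ i = z $ i * kry v1 W k $ i" for i
        using A[of k] that(1) uS by (cases "i = u") auto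
      have "z \<bullet> kry v1 W k = z \<bullet> kry v1 Wt k" unfolding inner_vec_def inner_real_def by (simp only: h)
      then show ?thesis using that(2) by simp
    qed
    then show ?thesis using cyc that(1) unfolding cyc_def by blast
  qed
  show ?thesis unfolding cyc_def Wt_def[symmetric]
  proof (intro allI impI)
    fix x :: "real^'n"
    assume xR: "Rs (insert u S) x" and xo: "\<forall>k. x \<bullet> kry v1 Wt k = 0"
    define x' where "x' = W *v x + x$u *\<^sub>R axis s 1 - c *\<^sub>R x + (c * x$u) *\<^sub>R axis u 1"
    have dotx': "x' \<bullet> y = x \<bullet> (Wt *v y) - c * (x \<bullet> y)" for y
    proof -
      have "x \<bullet> (Wt *v y) = x \<bullet> (W *v y) + c * (x \<bullet> (Mx u u *v y)) + x \<bullet> (Mx u s *v y)"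
        by (simp add: Wt_mult inner_add_right)
      also have "x \<bullet> (Mx u u *v y) = x$u * y$u"
        by (simp add: inner_vec_def Mx_mult if_distrib[where f="\<lambda>a. _ * a"] cong: if_cong)
      also have "x \<bullet> (Mx u s *v y) = x$u * y$s"
        by (simp add: inner_vec_def Mx_mult if_distrib[where f="\<lambda>a. _ * a"] cong: if_cong)
      also have "x \<bullet> (W *v y) = (W *v x) \<bullet> y" by (rule sym_dot[OF sym])
      finally have e: "x \<bullet> (Wt *v y) = (W *v x) \<bullet> y + c * (x $ u * y $ u) + x $ u * y $ s" .
      have "x' \<bullet> y = (W *v x) \<bullet> y + x$u * y$s - c * (x \<bullet> y) + c * x$u * y$u"
        by (simp add: x'_def inner_add_left inner_diff_left inner_axis' mult.commute)
      then show ?thesis using e by simp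
    qed
    have x'o: "\<forall>k. x' \<bullet> kry v1 Wt k = 0"
      using xo by (simp add: dotx' kry_Suc[symmetric])
    have x'R: "Rs S x'"
    proof (intro allI impI)
      fix i assume iS: "i \<notin> S"
      show "x' $ i = 0"
      proof (cases "i = u")
        case True
        then show ?thesis using supp_mult_out[OF supp iS, of x] us
          by (simp add: x'_def axis_comp)
      next
        case False
        then have "x $ i = 0" using xR iS by auto
        moreover have "i \<noteq> s" using iS sS by auto
        ultimately show ?thesis using supp_mult_out[OF supp iS, of x] False
          by (simp add: x'_def axis_comp)
      qed
    qed
    have x'0: "x' = 0" by (rule B[OF x'R x'o])
    have xv1: "x $ v1 = 0" using xo[rule_format, of 0] by (simp add: inner_axis)
    show "x = 0"
    proof (cases "x $ u = 0")
      case True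
      then have "Rs S x" using xR by auto
      then show ?thesis using B xo by blast
    next
      case False
      define a where "a = (1 / x$u) *\<^sub>R (x - x$u *\<^sub>R axis u 1)"
      have Wa: "W *v (x - x$u *\<^sub>R axis u 1) = W *v x"
        by (rule supp_mult_agree[OF supp uS]) (simp add: axis_comp)
      have Wu: "W *v axis u 1 = 0"
        using supp_mult_agree[OF supp uS, of "axis u 1" 0] by (simp add: axis_comp)
      have key: "W *v x - c *\<^sub>R x + (c * x$u) *\<^sub>R axis u 1 = - (x$u *\<^sub>R axis s 1)"
        using x'0 unfolding x'_def by (simp add: algebra_simps)
      have "W *v a - c *\<^sub>R a = (1 / x$u) *\<^sub>R (W *v x - c *\<^sub>R x + (c * x$u) *\<^sub>R axis u 1)"
        unfolding a_def by (simp add: matrix_vector_mult_scaleR Wu algebra_simps matrix_vector_right_distrib)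
      also have "\<dots> = - axis s 1" unfolding key using False by simp
      finally have "a $ v1 \<noteq> 0" using c by blast
      moreover have "a $ v1 = 0" using xv1 uv by (simp add: a_def axis_comp)
      ultimately show ?thesis by blast
    qed
  qed
qed

lemma W'_comp: "(W + t *\<^sub>R (Mx s u + Mx u s) + c *\<^sub>R Mx u u) $ i $ j
   = W $ i $ j + t * ((if i = s \<and> j = u then 1 else 0) + (if i = u \<and> j = s then 1 else 0)) + c * (if i = u \<and> j = u then 1 else 0)"
  by (simp add: Mx_comp)

lemma ext_step:
  fixes W :: "real^'n::finite^'n"
  assumes WE: "W \<in> edge_space E" and supp: "supp S W" and cyc: "cyc v1 S W"
    and v1S: "v1 \<in> S" and sS: "s \<in> S" and uS: "u \<notin> S" and Esu: "E s u"
    and symE: "symp E" and loops: "\<forall>i. E i i"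
  shows "\<exists>W'. W' \<in> edge_space E \<and> supp (insert u S) W' \<and> cyc v1 (insert u S) W'"
proof -
  have sym: "transpose W = W" using WE by (simp add: edge_space_def)
  obtain c where c: "\<forall>a. W *v a - c *\<^sub>R a = - axis s 1 \<longrightarrow> a $ v1 \<noteq> 0"
    using choose_c[OF sym cyc sS] by blast
  define Wt0 where "Wt0 = W + c *\<^sub>R Mx u u + Mx u s"
  have "cyc v1 (insert u S) Wt0" unfolding Wt0_def by (rule ext_step0[OF sym supp cyc v1S sS uS c])
  then have g0: "gram v1 (insert u S) (Wt0 + 0 *\<^sub>R Mx s u) \<noteq> 0" by (simp add: cyc_gram)
  obtain \<sigma> where \<sigma>: "0 < \<sigma>" "\<sigma> < 1" "gram v1 (insert u S) (Wt0 + \<sigma> *\<^sub>R Mx s u) \<noteq> 0"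
    using poly_line_nonzero[OF poly_gram g0, of 1] by auto
  define Wt where "Wt = Wt0 + \<sigma> *\<^sub>R Mx s u"
  have cycWt: "cyc v1 (insert u S) Wt" using \<sigma>(3) by (simp add: cyc_gram Wt_def)
  define t where "t = sqrt \<sigma>"
  have t0: "t > 0" using \<sigma> by (simp add: t_def)
  have tt: "t * t = \<sigma>" using \<sigma> by (simp add: t_def)
  define W' where "W' = W + t *\<^sub>R (Mx s u + Mx u s) + c *\<^sub>R Mx u u"
  define sc where "sc y = (\<chi> i. if i = u then t * y $ i else y $ i)" for y :: "real^'n"
  have us: "u \<noteq> s" using sS uS by auto
  have uv: "u \<noteq> v1" using v1S uS by auto
  have Wsc: "W *v sc y = W *v y" for y
    by (rule supp_mult_agree[OF supp uS]) (simp add: sc_def)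
  have Wu: "(W *v y) $ u = 0" for y by (rule supp_mult_out[OF supp uS])
  have simv: "W' *v sc y = sc (Wt *v y)" for y
  proof -
    have "(W' *v sc y) $ i = (sc (Wt *v y)) $ i" for i
    proof -
      have L: "(W' *v sc y) $ i = (W *v y) $ i + t * ((if i = s then t * y $ u else 0) + (if i = u then y $ s else 0))
           + c * (if i = u then t * y $ u else 0)"
        unfolding W'_def using us
        by (simp add: matrix_vector_mult_add_rdistrib scaleR_matrix_vector_assoc[symmetric] Mx_mult Wsc matrix_vector_right_distrib)
           (simp add: sc_def)
      have R: "(Wt *v y) $ i = (W *v y) $ i + c * (if i = u then y $ u else 0) + (if i = u then y $ s else 0) + \<sigma> * (if i = s then y $ u else 0)"
        unfolding Wt_def Wt0_def
        by (simp add: matrix_vector_mult_add_rdistrib scaleR_matrix_vector_assoc[symmetric] Mx_mult)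
      show ?thesis
        using us Wu[of y] tt R unfolding L
        by (cases "i = u"; cases "i = s") (simp_all add: R sc_def algebra_simps)
    qed
    then show ?thesis by (simp add: vec_eq_iff)
  qed
  have krysc: "kry v1 W' k = sc (kry v1 Wt k)" for k
  proof (induction k)
    case 0 then show ?case using uv by (simp add: sc_def vec_eq_iff axis_comp)
  next
    case (Suc k) then show ?case by (simp add: kry_Suc simv)
  qed
  have dotsc: "x \<bullet> sc y = sc x \<bullet> y" for x y
  proof -
    have h: "x $ i * sc y $ i = sc x $ i * y $ i" for i by (simp add: sc_def)
    show ?thesis unfolding inner_vec_def inner_real_def by (simp only: h)
  qed
  have cyc': "cyc v1 (insert u S) W'"
    unfolding cyc_def
  proof (intro allI impI)
    fix x :: "real^'n" assume xR: "Rs (insert u S) x" and xo: "\<forall>k. x \<bullet> kry v1 W' k = 0"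
    have "Rs (insert u S) (sc x)" using xR by (simp add: sc_def)
    moreover have "\<forall>k. sc x \<bullet> kry v1 Wt k = 0" using xo by (simp add: krysc dotsc)
    ultimately have "sc x = 0" using cycWt unfolding cyc_def by blast
    then have h: "\<forall>i. (if i = u then t * x $ i else x $ i) = 0" by (simp add: sc_def vec_eq_iff)
    have "x $ i = 0" for i using h[rule_format, of i] t0 by (cases "i = u") auto
    then show "x = 0" by (simp add: vec_eq_iff)
  qed
  have symW: "W $ i $ j = W $ j $ i" for i j
    using sym by (metis transpose_def vec_lambda_beta)
  have W'c: "W' $ i $ j = W $ i $ j + t * ((if i = s \<and> j = u then 1 else 0) + (if i = u \<and> j = s then 1 else 0)) + c * (if i = u \<and> j = u then 1 else 0)" for i j
    unfolding W'_def by (rule W'_comp)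
  have W'sym: "W' $ i $ j = W' $ j $ i" for i j
  proof -
    have e: "W $ i $ j = W $ j $ i" by (rule symW)
    have h1: "(if j = s \<and> i = u then 1 else 0) = (if i = u \<and> j = s then 1 else (0::real))" by (simp only: conj_commute)
    have h2: "(if j = u \<and> i = s then 1 else 0) = (if i = s \<and> j = u then 1 else (0::real))" by (simp only: conj_commute)
    have h3: "(if j = u \<and> i = u then 1 else 0) = (if i = u \<and> j = u then 1 else (0::real))" by (simp only: conj_commute)
    show ?thesis unfolding W'c[of i j] W'c[of j i] e h1 h2 h3 by (simp add: algebra_simps)
  qed
  have W'zero: "W' $ i $ j = 0" if "W $ i $ j = 0" "\<not> (i = s \<and> j = u)" "\<not> (i = u \<and> j = s)" "\<not> (i = u \<and> j = u)" for i j
  proof -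
    have "(if i = s \<and> j = u then 1 else 0) = (0::real)" by (rule if_not_P[OF that(2)])
    moreover have "(if i = u \<and> j = s then 1 else 0) = (0::real)" by (rule if_not_P[OF that(3)])
    moreover have "(if i = u \<and> j = u then 1 else 0) = (0::real)" by (rule if_not_P[OF that(4)])
    ultimately show ?thesis unfolding W'c[of i j] that(1) by simp
  qed
  have W'E: "W' \<in> edge_space E"
    unfolding edge_space_def
  proof (intro CollectI conjI allI impI)
    show "transpose W' = W'"
      unfolding transpose_def by (simp add: vec_eq_iff W'sym)
  next
    fix i j assume nE: "\<not> E i j"
    have Eus: "E u s" using Esu symE by (simp add: symp_def)
    have ne: "\<not> (i = s \<and> j = u)" "\<not> (i = u \<and> j = s)" "\<not> (i = u \<and> j = u)"
      using nE Esu Eus loops by blast+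
    have "W $ i $ j = 0" using WE nE unfolding edge_space_def by blast
    then show "W' $ i $ j = 0" using W'zero ne by blast
  qed
  have suppW': "supp (insert u S) W'"
    unfolding supp_def
  proof (intro allI impI)
    fix i j assume nz: "W' $ i $ j \<noteq> 0"
    show "i \<in> insert u S \<and> j \<in> insert u S"
    proof (rule ccontr)
      assume out: "\<not> (i \<in> insert u S \<and> j \<in> insert u S)"
      then have "W $ i $ j = 0" using supp unfolding supp_def by blast
      moreover have "\<not> (i = s \<and> j = u)" "\<not> (i = u \<and> j = s)" "\<not> (i = u \<and> j = u)"
        using out sS by blast+
      ultimately show False using W'zero nz by blast
    qed
  qed
  show ?thesis using W'E suppW' cyc' by blast
qed

lemma cross_edge:
  assumes "E\<^sup>*\<^sup>* a b" "a \<in> S" "b \<notin> S"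
  shows "\<exists>x y. x \<in> S \<and> y \<notin> S \<and> E x y"
  using assms
proof (induction rule: rtranclp_induct)
  case base then show ?case by simp
next
  case (step y z)
  show ?case
  proof (cases "y \<in> S")
    case True then show ?thesis using step by blast
  next
    case False then show ?thesis using step by blast
  qed
qed

lemma base_good:
  fixes v1 :: "'n::finite"
  shows "(0::real^'n^'n) \<in> edge_space E \<and> supp {v1} 0 \<and> cyc v1 {v1} 0"
proof (intro conjI)
  show "(0::real^'n^'n) \<in> edge_space E"
    by (simp add: edge_space_def transpose_def vec_eq_iff)
  show "supp {v1} (0::real^'n^'n)" by (simp add: supp_def)
  show "cyc v1 {v1} (0::real^'n^'n)"
    unfolding cyc_def
  proof (intro allI impI)
    fix x :: "real^'n" assume xR: "Rs {v1} x" and xo: "\<forall>k. x \<bullet> kry v1 0 k = 0"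
    have "x $ v1 = 0" using xo[rule_format, of 0] by (simp add: inner_axis)
    then have "x $ i = 0" for i using xR by (cases "i = v1") auto
    then show "x = 0" by (simp add: vec_eq_iff)
  qed
qed

lemma exists_cyclic:
  fixes E :: "'n::finite \<Rightarrow> 'n \<Rightarrow> bool" and v1 :: 'n
  assumes symE: "symp E" and loops: "\<forall>i. E i i" and conn: "\<forall>i j. E\<^sup>*\<^sup>* i j"
  shows "\<exists>W \<in> edge_space E. cyc v1 UNIV W"
proof -
  define good where "good S \<longleftrightarrow> v1 \<in> S \<and> (\<exists>W \<in> edge_space E. supp S W \<and> cyc v1 S W)" for S
  have step: "\<forall>n. n \<le> CARD('n) \<longrightarrow> (\<exists>S. good S \<and> n \<le> card S)"
  proof (intro allI)
    fix n show "n \<le> CARD('n) \<longrightarrow> (\<exists>S. good S \<and> n \<le> card S)"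
    proof (induction n)
      case 0
      have "good {v1}" unfolding good_def using base_good[of E v1] by blast
      then show ?case by blast
    next
      case (Suc n)
      show ?case
      proof
        assume le: "Suc n \<le> CARD('n)"
        then obtain S where S: "good S" "n \<le> card S" using Suc by auto
        show "\<exists>S. good S \<and> Suc n \<le> card S"
        proof (cases "Suc n \<le> card S")
          case True then show ?thesis using S by blast
        next
          case False
          then have cS: "card S = n" using S by simp
          have "S \<noteq> UNIV" using cS le by auto
          then obtain w where w: "w \<notin> S" by blast
          have v1S: "v1 \<in> S" using S unfolding good_def by blast
          obtain a b where ab: "a \<in> S" "b \<notin> S" "E a b"
            using cross_edge[OF conn[rule_format, of v1 w] v1S w] by blast
          obtain W where W: "W \<in> edge_space E" "supp S W" "cyc v1 S W" using S unfolding good_def by blast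
          obtain W' where W': "W' \<in> edge_space E" "supp (insert b S) W'" "cyc v1 (insert b S) W'"
            using ext_step[OF W v1S ab(1) ab(2) ab(3) symE loops] by blast
          have "good (insert b S)" unfolding good_def using W' v1S by blast
          moreover have "card (insert b S) = Suc n" using cS ab(2) by (simp add: card_insert_disjoint)
          ultimately show ?thesis by (intro exI[of _ "insert b S"]) simp
        qed
      qed
    qed
  qed
  then obtain S where S: "good S" "CARD('n) \<le> card S" by blast
  have "card S \<le> CARD('n)" by (rule card_mono) auto
  then have "S = UNIV" using S(2) card_eq_UNIV_imp_eq_UNIV[of S] by simp
  then show ?thesis using S(1) unfolding good_def by blast
qed

lemma span_kry_invariant:
  assumes "y \<in> span (range (kry v1 V))"
  shows "V *v y \<in> span (range (kry v1 V))"
proof -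
  have sub: "subspace {y. V *v y \<in> span (range (kry v1 V))}"
    unfolding subspace_def
    apply (intro conjI ballI allI)
      apply (simp add: span_0)
     apply (simp add: matrix_vector_right_distrib span_add)
    apply (simp add: matrix_vector_mult_scaleR span_scale)
    done
  have "V *v z \<in> span (range (kry v1 V))" if zin: "z \<in> range (kry v1 V)" for z
  proof -
    obtain j where "z = kry v1 V j" using zin by blast
    then have "V *v z = kry v1 V (Suc j)" by (simp add: kry_Suc)
    then show ?thesis by (simp add: span_base)
  qed
  then show ?thesis using span_induct[OF assms, of "\<lambda>y. V *v y \<in> span (range (kry v1 V))"] sub by auto
qed

lemma cyc_shift:
  fixes W W0 :: "real^'n::finite^'n"
  assumes cyc: "cyc v1 UNIV W" and W0: "\<And>y. W0 *v y = W *v y + c *\<^sub>R y"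
  shows "cyc v1 UNIV W0"
proof -
  have inspan: "kry v1 W k \<in> span (range (kry v1 W0))" for k
  proof (induction k)
    case 0
    have "kry v1 W0 0 \<in> span (range (kry v1 W0))" by (rule span_base) blast
    moreover have "kry v1 W 0 = kry v1 W0 0" by simp
    ultimately show ?case by simp
  next
    case (Suc k)
    have "kry v1 W (Suc k) = W0 *v kry v1 W k - c *\<^sub>R kry v1 W k" by (simp add: kry_Suc W0)
    moreover have "W0 *v kry v1 W k \<in> span (range (kry v1 W0))" by (rule span_kry_invariant[OF Suc])
    moreover have "c *\<^sub>R kry v1 W k \<in> span (range (kry v1 W0))" using Suc by (rule span_scale)
    ultimately show ?case by (simp add: span_diff)
  qed
  show ?thesis unfolding cyc_def
  proof (intro allI impI)
    fix x :: "real^'n" assume "Rs UNIV x" "\<forall>k. x \<bullet> kry v1 W0 k = 0"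
    then have "x \<bullet> kry v1 W k = 0" for k using orth_span[OF inspan[of k], of x] by blast
    then show "x = 0" using cyc unfolding cyc_def by blast
  qed
qed

lemma cyc_full:
  fixes V :: "real^'n::finite^'n"
  assumes "cyc v1 UNIV V"
  shows "dim (L_0 v1 V) = 0"
proof -
  have lv: "l_V v1 V = span (range (kry v1 V))" by (simp add: l_V_def kry_def[abs_def])
  have "dim (range (kry v1 V)) = DIM(real^'n)"
  proof (rule ccontr)
    assume "dim (range (kry v1 V)) \<noteq> DIM(real^'n)"
    then have lt: "dim (range (kry v1 V)) < DIM(real^'n)" using dim_subset_UNIV[of "range (kry v1 V)"]
      by simp
    obtain x where x: "x \<noteq> 0" "\<And>y. y \<in> span (range (kry v1 V)) \<Longrightarrow> orthogonal x y"
      using orthogonal_to_subspace_exists[OF lt] by blast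
    have "x \<bullet> kry v1 V k = 0" for k using x(2)[of "kry v1 V k"] by (simp add: span_base orthogonal_def)
    then have "x = 0" using assms unfolding cyc_def by blast
    then show False using x(1) by simp
  qed
  then have "span (range (kry v1 V)) = UNIV" using dim_eq_full[of "range (kry v1 V)"] by simp
  then have "l_V v1 V = UNIV" using lv by simp
  then have "L_minus v1 V = UNIV" by (auto simp: L_minus_def)
  then have "L_0 v1 V \<subseteq> {0}" unfolding L_0_def
  proof (intro subsetI)
    fix z assume "L_minus v1 V = UNIV" "z \<in> {z. \<forall>y\<in>L_minus v1 V. z \<bullet> y = 0}"
    then have "\<forall>y\<in>UNIV. z \<bullet> y = 0" by simp
    then have "z \<bullet> z = 0" by blast
    then show "z \<in> {0}" by simp
  qed
  then show ?thesis by simp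
qed

theorem mainTheorem19:
  fixes E :: "'n::finite \<Rightarrow> 'n \<Rightarrow> bool" and v1 :: 'n
  assumes "symp E"
    and "\<forall>i. E i i"
    and "\<forall>i j. E\<^sup>*\<^sup>* i j"
  shows "\<exists>S. S \<subseteq> H_Gamma E \<and> openin (top_of_set (H_Gamma E)) S
            \<and> H_Gamma E \<subseteq> closure S
            \<and> lower_dim E (H_Gamma E - S)
            \<and> (\<forall>V \<in> S. dim (L_0 v1 V) = 0)"
proof -
  obtain W where WE: "W \<in> edge_space E" and cW: "cyc v1 UNIV W"
    using exists_cyclic[OF assms] by blast
  obtain K where K: "\<And>y. norm (W *v y) \<le> norm y * K" "K > 0"
    using bounded_linear.pos_bounded[OF matrix_vector_mul_bounded_linear[of W]] by blast
  define c where "c = K + 1"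
  define Dg where "Dg = (\<chi> i j. if i = j then c else 0 :: real^'n^'n)"
  define W0 where "W0 = W + Dg"
  have Dgv: "Dg *v y = c *\<^sub>R y" for y
    by (simp add: Dg_def matrix_vector_mult_def vec_eq_iff if_distrib[where f="\<lambda>a. a * _"] cong: if_cong)
  have W0v: "W0 *v y = W *v y + c *\<^sub>R y" for y
    by (simp add: W0_def matrix_vector_mult_add_rdistrib Dgv)
  have symW: "W $ i $ j = W $ j $ i" for i j
    using WE unfolding edge_space_def by (metis (mono_tags, lifting) mem_Collect_eq transpose_def vec_lambda_beta)
  have W0E: "W0 \<in> edge_space E"
    unfolding edge_space_def
  proof (intro CollectI conjI allI impI)
    show "transpose W0 = W0"
      unfolding transpose_def W0_def Dg_def by (simp add: vec_eq_iff symW)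
  next
    fix i j assume "\<not> E i j"
    moreover then have "i \<noteq> j" using assms(2) by auto
    ultimately show "W0 $ i $ j = 0" using WE unfolding W0_def Dg_def edge_space_def by simp
  qed
  have W0pd: "x \<bullet> (W0 *v x) > 0" if "x \<noteq> 0" for x
  proof -
    have "\<bar>x \<bullet> (W *v x)\<bar> \<le> norm x * norm (W *v x)" by (rule Cauchy_Schwarz_ineq2)
    also have "\<dots> \<le> norm x * (norm x * K)" using K(1)[of x] by (simp add: mult_left_mono)
    finally have a: "x \<bullet> (W *v x) \<ge> - (K * (norm x)^2)" by (simp add: power2_eq_square algebra_simps)
    have eq: "x \<bullet> (W0 *v x) = x \<bullet> (W *v x) + K * (norm x)^2 + (norm x)^2"
      by (simp add: W0v inner_add_right power2_norm_eq_inner c_def algebra_simps)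
    have n: "(norm x)^2 > 0" using that by simp
    show ?thesis using eq a n by linarith
  qed
  have W0H: "W0 \<in> H_Gamma E" unfolding H_Gamma_def using W0E W0pd by blast
  have cW0: "cyc v1 UNIV W0" by (rule cyc_shift[OF cW W0v])
  define p where "p = gram v1 UNIV"
  have pP: "p \<in> poly_funs" unfolding p_def using poly_gram[of v1 UNIV] by (simp add: fun_eq_iff)
  have pW0: "p W0 \<noteq> 0" using cW0 by (simp add: p_def cyc_gram)
  define S where "S = {V \<in> H_Gamma E. p V \<noteq> 0}"
  have "S \<subseteq> H_Gamma E" by (auto simp: S_def)
  moreover have "openin (top_of_set (H_Gamma E)) S"
  proof -
    have "open {V. p V \<noteq> 0}" by (rule open_Collect_neq[OF poly_cont[OF pP] continuous_on_const])
    then have "openin (top_of_set (H_Gamma E)) (H_Gamma E \<inter> {V. p V \<noteq> 0})" by (rule openin_open_Int)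
    moreover have "H_Gamma E \<inter> {V. p V \<noteq> 0} = S" by (auto simp: S_def)
    ultimately show ?thesis by simp
  qed
  moreover have "H_Gamma E \<subseteq> closure S"
  proof
    fix V assume VH: "V \<in> H_Gamma E"
    show "V \<in> closure S"
      unfolding closure_approachable
    proof (intro allI impI)
      fix e :: real assume e: "e > 0"
      define D where "D = W0 - V"
      define d where "d = norm D + 1"
      have d0: "d > 0" by (simp add: d_def add_nonneg_pos)
      have p1: "p (V + 1 *\<^sub>R D) \<noteq> 0" using pW0 by (simp add: D_def)
      obtain \<sigma> where \<sigma>: "0 < \<sigma>" "\<sigma> < min 1 (e / d)" "p (V + \<sigma> *\<^sub>R D) \<noteq> 0"
        using poly_line_nonzero[OF pP p1, of "min 1 (e / d)"] e d0 by auto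
      define y where "y = V + \<sigma> *\<^sub>R D"
      have yc: "y $ i $ j = (1 - \<sigma>) * V $ i $ j + \<sigma> * W0 $ i $ j" for i j
        by (simp add: y_def D_def algebra_simps)
      have VE: "V \<in> edge_space E" using VH by (simp add: H_Gamma_def)
      have symV: "V $ i $ j = V $ j $ i" for i j
        using VE unfolding edge_space_def by (metis (mono_tags, lifting) mem_Collect_eq transpose_def vec_lambda_beta)
      have symW0: "W0 $ i $ j = W0 $ j $ i" for i j
        using W0E unfolding edge_space_def by (metis (mono_tags, lifting) mem_Collect_eq transpose_def vec_lambda_beta)
      have yE: "y \<in> edge_space E"
        unfolding edge_space_def
      proof (intro CollectI conjI allI impI)
        show "transpose y = y" unfolding transpose_def by (simp add: vec_eq_iff yc symV symW0)
      next
        fix i j assume "\<not> E i j"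
        then show "y $ i $ j = 0" using VE W0E unfolding edge_space_def by (simp add: yc)
      qed
      have ypd: "x \<bullet> (y *v x) > 0" if "x \<noteq> 0" for x
      proof -
        have "y *v x = V *v x + \<sigma> *\<^sub>R (W0 *v x - V *v x)"
          by (simp add: y_def D_def matrix_vector_mult_add_rdistrib scaleR_matrix_vector_assoc[symmetric]
              matrix_vector_mult_diff_rdistrib)
        then have "x \<bullet> (y *v x) = x \<bullet> (V *v x) + \<sigma> * (x \<bullet> (W0 *v x) - x \<bullet> (V *v x))"
          by (simp only: inner_add_right inner_diff_right inner_scaleR_right)
        then have "x \<bullet> (y *v x) = (1 - \<sigma>) * (x \<bullet> (V *v x)) + \<sigma> * (x \<bullet> (W0 *v x))"
          by (simp add: algebra_simps)
        moreover have "x \<bullet> (V *v x) > 0" using VH that by (simp add: H_Gamma_def)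
        moreover have "x \<bullet> (W0 *v x) > 0" using W0pd that by blast
        moreover have "1 - \<sigma> > 0" using \<sigma> by simp
        moreover have "\<sigma> > 0" using \<sigma> by simp
        ultimately show ?thesis by (metis add_pos_pos mult_pos_pos)
      qed
      have yS: "y \<in> S" unfolding S_def H_Gamma_def using yE ypd \<sigma>(3) by (simp add: y_def)
      have "dist y V = \<sigma> * norm D" by (simp add: y_def dist_norm \<sigma>(1) less_imp_le)
      also have "\<dots> \<le> \<sigma> * d" using \<sigma>(1) by (simp add: d_def)
      also have "\<dots> < (e / d) * d"
      proof -
        have "\<sigma> < e / d" using \<sigma>(2) by simp
        then show ?thesis using d0 by (rule mult_strict_right_mono)
      qed
      also have "\<dots> = e" using d0 by simp
      finally show "\<exists>y\<in>S. dist y V < e" using yS by blast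
    qed
  qed
  moreover have "lower_dim E (H_Gamma E - S)"
    unfolding lower_dim_def using pP W0E pW0 by (intro bexI[of _ p]) (auto simp: S_def)
  moreover have "\<forall>V \<in> S. dim (L_0 v1 V) = 0"
  proof
    fix V assume "V \<in> S"
    then have "cyc v1 UNIV V" by (simp add: S_def p_def cyc_gram)
    then show "dim (L_0 v1 V) = 0" by (rule cyc_full)
  qed
  ultimately show ?thesis by blast
qed

end
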